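(* Assume that at least one of the following problems has already been solved: nontrivial move, leader election, or direction agreement. Then the location discovery problem can be solved in $n+O(\log N)$ rounds in each of the following settings: - the lazy model, for arbitrary $n$; - the basic model, for odd $n$.
   Context: Model: $n>4$ agents are at distinct, arbitrary initial positions on a circle of circumference $1$ and act in synchronised unit-time rounds. Each agent has its own notion of right (clockwise) and left; these need not be consistent across agents. At the start of a round each agent chooses a direction and moves at unit speed. Agents never pass: two moving agents that collide instantly reverse direction, and a moving agent hitting an idle one becomes idle while the idle one starts moving in the former's objective direction. There is no communication. At the end of each round an agent learns the clockwise distance, in its own orientation, from its start-of-round to its end-of-round position. The two models differ as follows: - Basic: direction in $\{\text{right},\text{left}\}$. - Lazy: direction in $\{\text{idle},\text{right},\text{left}\}$. Agents have distinct IDs in $\{1,\dots,N\}$ with $N\ge n$ known. Rotation index: if $n_C$ agents start clockwise and $n_A$ anticlockwise (objective orientation), each agent moves to the initial position of the agent $(n_C-n_A)\bmod n$ places clockwise. A nontrivial move is a round with rotation index not in $\{0,n/2\}$. Problems: - Nontrivial move problem: each agent holds a direction such that the round in which all start in these directions is a nontrivial move. - Leader election: exactly one agent is "leader". - Direction agreement: all agents agree on which direction is clockwise. - Location discovery: each agent determines the initial positions of all other agents relative to its own initial position. *)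

theory Defs
  imports Complex_Main
begin

text \<open>Combinatorial model of synchronous rounds of n agents on a circle of
circumference 1. Agents are indexed 0..n-1 in objective clockwise order of
their initial positions p 0 < p 1 < ... < p (n-1) in [0,1) (objective clockwise
= increasing coordinate). o i = True iff agent i's own notion of clockwise
agrees with the objective one. ident i is the ID of agent i.\<close>

datatype dir = Idle | Right | Left
datatype model = Basic | Lazy

definition allowed :: "model \<Rightarrow> dir \<Rightarrow> bool" where
  "allowed m d = (m = Lazy \<or> d \<noteq> Idle)"

definition obj_cw :: "bool \<Rightarrow> dir \<Rightarrow> bool" where
  "obj_cw ori d = ((d = Right \<and> ori) \<or> (d = Left \<and> \<not> ori))"

definition obj_acw :: "bool \<Rightarrow> dir \<Rightarrow> bool" where
  "obj_acw ori d = ((d = Left \<and> ori) \<or> (d = Right \<and> \<not> ori))"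

definition rot_index :: "nat \<Rightarrow> (nat \<Rightarrow> bool) \<Rightarrow> (nat \<Rightarrow> dir) \<Rightarrow> nat" where
  "rot_index n ori c =
     nat ((int (card {i. i < n \<and> obj_cw (ori i) (c i)})
           - int (card {i. i < n \<and> obj_acw (ori i) (c i)})) mod int n)"

definition own_dist :: "bool \<Rightarrow> real \<Rightarrow> real \<Rightarrow> real" where
  "own_dist ori x y = (if ori then frac (y - x) else frac (x - y))"

definition valid_config ::
  "nat \<Rightarrow> nat \<Rightarrow> (nat \<Rightarrow> real) \<Rightarrow> (nat \<Rightarrow> nat) \<Rightarrow> bool" where
  "valid_config N n p ident =
     (4 < n \<and> n \<le> N \<and> (\<forall>i<n. 0 \<le> p i \<and> p i < 1)
      \<and> (\<forall>i j. i < j \<and> j < n \<longrightarrow> p i < p j)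
      \<and> inj_on ident {..<n} \<and> (\<forall>i<n. ident i \<in> {1..N}))"

text \<open>Execution of a deterministic algorithm alg (choice as a function of N, n,
own ID, own pre-computed input, own observation history). After t rounds:
cumulative index shift s (agent i sits at initial position of agent (i+s) mod n)
and the observation histories.\<close>
fun run :: "(nat \<Rightarrow> nat \<Rightarrow> nat \<Rightarrow> 'a \<Rightarrow> real list \<Rightarrow> dir) \<Rightarrow> nat \<Rightarrow> nat \<Rightarrow>
    (nat \<Rightarrow> real) \<Rightarrow> (nat \<Rightarrow> bool) \<Rightarrow> (nat \<Rightarrow> nat) \<Rightarrow> (nat \<Rightarrow> 'a) \<Rightarrow> nat \<Rightarrow>
    nat \<times> (nat \<Rightarrow> real list)" where
  "run alg N n p ori ident inp 0 = (0, (\<lambda>i. []))"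
| "run alg N n p ori ident inp (Suc t) =
     (case run alg N n p ori ident inp t of (s, h) \<Rightarrow>
        (let c = (\<lambda>i. alg N n (ident i) (inp i) (h i));
             r = rot_index n ori c
         in ((s + r) mod n,
             (\<lambda>i. h i @ [own_dist (ori i) (p ((i + s) mod n)) (p ((i + s + r) mod n))]))))"

definition ntm_spec :: "model \<Rightarrow> nat \<Rightarrow> (nat \<Rightarrow> bool) \<Rightarrow> (nat \<Rightarrow> dir) \<Rightarrow> bool" where
  "ntm_spec m n ori d = ((\<forall>i<n. allowed m (d i)) \<and>
     rot_index n ori d \<noteq> 0 \<and> 2 * rot_index n ori d \<noteq> n)"

definition le_spec :: "model \<Rightarrow> nat \<Rightarrow> (nat \<Rightarrow> bool) \<Rightarrow> (nat \<Rightarrow> bool) \<Rightarrow> bool" where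
  "le_spec m n ori leader = (card {i. i < n \<and> leader i} = 1)"

text \<open>Direction agreement: agent i holds keep i = True iff it takes its own
clockwise as the agreed clockwise; all agents agree on one objective direction.\<close>
definition da_spec :: "model \<Rightarrow> nat \<Rightarrow> (nat \<Rightarrow> bool) \<Rightarrow> (nat \<Rightarrow> bool) \<Rightarrow> bool" where
  "da_spec m n ori keep = (\<exists>c. \<forall>i<n. (ori i = keep i) = c)"

definition LD_solvable ::
  "model \<Rightarrow> (model \<Rightarrow> nat \<Rightarrow> (nat \<Rightarrow> bool) \<Rightarrow> (nat \<Rightarrow> 'a) \<Rightarrow> bool) \<Rightarrow> bool" where
  "LD_solvable m spec =
    (\<exists>(C::real) (alg :: nat \<Rightarrow> nat \<Rightarrow> nat \<Rightarrow> 'a \<Rightarrow> real list \<Rightarrow> dir)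
       (out :: nat \<Rightarrow> nat \<Rightarrow> nat \<Rightarrow> 'a \<Rightarrow> real list \<Rightarrow> real set) (T :: nat \<Rightarrow> nat \<Rightarrow> nat).
      (\<forall>N n x y z. allowed m (alg N n x y z)) \<and>
      (\<forall>N n. 4 < n \<and> n \<le> N \<longrightarrow> real (T N n) \<le> real n + C * log 2 (real N)) \<and>
      (\<forall>N n p ori ident inp.
         valid_config N n p ident \<and> (m = Lazy \<or> odd n) \<and> spec m n ori inp \<longrightarrow>
         (\<forall>i<n. out N n (ident i) (inp i) (snd (run alg N n p ori ident inp (T N n)) i)
                = {own_dist (ori i) (p i) (p j) | j. j < n \<and> j \<noteq> i})))"

end

theory Submission
  imports Defs
begin

definition ctr :: "bool \<Rightarrow> dir \<Rightarrow> int" where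
  "ctr o' d = (if obj_cw o' d then 1 else if obj_acw o' d then -1 else 0)"

lemma card_int_sum: "int (card {i. i < (n::nat) \<and> P i}) = (\<Sum>i<n. if P i then 1 else 0)"
proof -
  have "(\<Sum>i<n. if P i then 1 else (0::int)) = (\<Sum>i\<in>{i\<in>{..<n}. P i}. 1)"
    by (rule sum.inter_filter[symmetric]) simp
  also have "{i\<in>{..<n}. P i} = {i. i < n \<and> P i}" by auto
  finally show ?thesis by simp
qed

lemma ctr_alt: "ctr o' d = (if obj_cw o' d then 1 else 0) - (if obj_acw o' d then 1 else 0)"
  by (cases d; cases o') (auto simp: ctr_def obj_cw_def obj_acw_def)

lemma rot_sum: "rot_index n ori c = nat ((\<Sum>i<n. ctr (ori i) (c i)) mod int n)"
proof -
  have "int (card {i. i < n \<and> obj_cw (ori i) (c i)}) - int (card {i. i < n \<and> obj_acw (ori i) (c i)})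
     = (\<Sum>i<n. ctr (ori i) (c i))"
    unfolding card_int_sum by (simp only: ctr_alt sum_subtractf)
  then show ?thesis unfolding rot_index_def by (simp only:)
qed

lemma rot_cong: "(\<And>i. i < n \<Longrightarrow> c i = c' i) \<Longrightarrow> rot_index n ori c = rot_index n ori c'"
  unfolding rot_sum by (intro arg_cong[where f="\<lambda>x. nat (x mod int n)"] sum.cong) auto

lemma rot_less: "0 < n \<Longrightarrow> rot_index n ori c < n"
  unfolding rot_sum by (simp add: nat_less_iff)

lemma rot_int: "0 < n \<Longrightarrow> int (rot_index n ori c) = (\<Sum>i<n. ctr (ori i) (c i)) mod int n"
  unfolding rot_sum by simp

lemma rot_zero_iff: "0 < n \<Longrightarrow> rot_index n ori c = 0 \<longleftrightarrow> int n dvd (\<Sum>i<n. ctr (ori i) (c i))"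
proof -
  assume n: "0 < n"
  have "0 \<le> (\<Sum>i<n. ctr (ori i) (c i)) mod int n" using n by simp
  then show ?thesis unfolding rot_sum nat_0_iff dvd_eq_mod_eq_0 by linarith
qed

definition rdir :: "dir \<Rightarrow> dir" where
  "rdir d = (case d of Idle \<Rightarrow> Idle | Right \<Rightarrow> Left | Left \<Rightarrow> Right)"

lemma ctr_rdir: "ctr o' (rdir d) = - ctr o' d"
  by (cases d; cases o') (auto simp: ctr_def obj_cw_def obj_acw_def rdir_def)

lemma rot_rdir: "0 < n \<Longrightarrow> (rot_index n ori c + rot_index n ori (\<lambda>i. rdir (c i))) mod n = 0"
proof -
  assume n: "0 < n"
  define s where "s = (\<Sum>i<n. ctr (ori i) (c i))"
  have a: "int (rot_index n ori c) = s mod int n" using n by (simp add: rot_int s_def)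
  have "(\<Sum>i<n. ctr (ori i) (rdir (c i))) = - s" by (simp add: ctr_rdir sum_negf s_def)
  then have b: "int (rot_index n ori (\<lambda>i. rdir (c i))) = (- s) mod int n" using n by (simp add: rot_int)
  have "int ((rot_index n ori c + rot_index n ori (\<lambda>i. rdir (c i))) mod n)
      = (int (rot_index n ori c) + int (rot_index n ori (\<lambda>i. rdir (c i)))) mod int n"
    by (simp only: of_nat_mod of_nat_add)
  also have "\<dots> = (s mod int n + (- s) mod int n) mod int n" by (simp only: a b)
  also have "\<dots> = (s + - s) mod int n" by (simp only: mod_add_eq)
  also have "\<dots> = 0" by simp
  finally show ?thesis by (simp only: of_nat_eq_0_iff)
qed

lemma own_dist_add: "own_dist o' x z = frac (own_dist o' x y + own_dist o' y z)"
  unfolding own_dist_def by (auto simp: frac_add_simps)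

lemma frac_frac_id: "frac (frac x) = frac x"
  by (simp add: frac_eq frac_lt_1)

lemma own_dist_frac: "frac (own_dist o' x y) = own_dist o' x y"
  unfolding own_dist_def by (simp add: frac_frac_id)

fun nbits :: "nat \<Rightarrow> nat" where
  "nbits 0 = 0"
| "nbits (Suc k) = Suc (nbits (Suc k div 2))"

definition bitof :: "nat \<Rightarrow> nat \<Rightarrow> bool" where
  "bitof b x = odd (x div 2 ^ b)"

definition retk :: "real list \<Rightarrow> nat \<Rightarrow> bool" where
  "retk h k = (frac (sum_list (take k h)) = 0)"

definition hasm :: "real list \<Rightarrow> bool" where
  "hasm h = (\<exists>k. 0 < k \<and> k \<le> length h \<and> retk h k)"

definition mloc :: "real list \<Rightarrow> nat" where
  "mloc h = (LEAST k. 0 < k \<and> k \<le> length h \<and> retk h k)"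

fun inC :: "real list \<Rightarrow> nat \<Rightarrow> nat \<Rightarrow> bool \<Rightarrow> nat \<Rightarrow> bool" where
  "inC h m x l 0 = l"
| "inC h m x l (Suc b) = (inC h m x l b \<and> (h ! (m + 2 * b) \<noteq> 0 \<longrightarrow> bitof b x))"

definition cwf :: "bool \<Rightarrow> dir" where "cwf kp = (if kp then Right else Left)"
definition offf :: "model \<Rightarrow> bool \<Rightarrow> dir" where "offf mdl kp = (if mdl = Lazy then Idle else rdir (cwf kp))"
definition selc :: "bool \<Rightarrow> bool \<Rightarrow> model \<Rightarrow> dir" where "selc c kp mdl = (if c then cwf kp else offf mdl kp)"

definition galg :: "model \<Rightarrow> (nat \<Rightarrow> nat) \<Rightarrow> ('a \<Rightarrow> dir) \<Rightarrow> ('a \<Rightarrow> real list \<Rightarrow> nat \<Rightarrow> bool)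
   \<Rightarrow> ('a \<Rightarrow> bool) \<Rightarrow> nat \<Rightarrow> nat \<Rightarrow> nat \<Rightarrow> 'a \<Rightarrow> real list \<Rightarrow> dir" where
  "galg mdl B d0 kf lf N n x a h =
   (if \<not> hasm h then (if allowed mdl (d0 a) then d0 a else Right) else
    (let m = mloc h; u = length h - m; kp = kf a (take m h) m in
     if u < 2 * B N then
       (if even u then selc (inC h m x (lf a) (u div 2) \<and> bitof (u div 2) x) kp mdl
        else rdir (selc (inC h m x (lf a) (u div 2) \<and> bitof (u div 2) x) kp mdl))
     else if (u - 2 * B N) mod m = 0 then selc (inC h m x (lf a) (B N)) kp mdl
     else (if allowed mdl (d0 a) then d0 a else Right)))"

lemma allowed_rdir: "allowed mdl d \<Longrightarrow> allowed mdl (rdir d)"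
  by (cases d) (auto simp: allowed_def rdir_def)

lemma allowed_selc: "allowed mdl (selc c kp mdl)"
  by (auto simp: selc_def cwf_def offf_def allowed_def rdir_def)

lemma galg_allowed: "allowed mdl (galg mdl B d0 kf lf N n x a h)"
  unfolding galg_def Let_def
  by (auto simp: allowed_selc allowed_rdir intro: allowed_selc allowed_rdir) (simp_all add: allowed_def)

lemma galg_nohasm: "\<not> hasm h \<Longrightarrow> galg mdl B d0 kf lf N n x a h = (if allowed mdl (d0 a) then d0 a else Right)"
  by (simp add: galg_def)

lemma galg_test: "hasm h \<Longrightarrow> mloc h = m \<Longrightarrow> length h = t \<Longrightarrow> t - m < 2 * B N \<Longrightarrow>
  galg mdl B d0 kf lf N n x a h =
   (if even (t - m) then selc (inC h m x (lf a) ((t - m) div 2) \<and> bitof ((t - m) div 2) x) (kf a (take m h) m) mdl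
    else rdir (selc (inC h m x (lf a) ((t - m) div 2) \<and> bitof ((t - m) div 2) x) (kf a (take m h) m) mdl))"
  by (simp add: galg_def Let_def)

lemma galg_ph3: "hasm h \<Longrightarrow> mloc h = m \<Longrightarrow> length h = t \<Longrightarrow> \<not> t - m < 2 * B N \<Longrightarrow>
  galg mdl B d0 kf lf N n x a h =
   (if (t - m - 2 * B N) mod m = 0 then selc (inC h m x (lf a) (B N)) (kf a (take m h) m) mdl
    else (if allowed mdl (d0 a) then d0 a else Right))"
  by (simp add: galg_def Let_def)

lemma mod_add_self_iff: "x < (n::nat) \<Longrightarrow> s < n \<Longrightarrow> (x + s) mod n = x \<longleftrightarrow> s = 0"
proof
  assume a: "x < n" "s < n" "(x + s) mod n = x"
  show "s = 0"
  proof (cases "x + s < n")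
    case True then show ?thesis using a by simp
  next
    case False
    then have "(x + s) mod n = x + s - n" using a by (simp add: le_mod_geq)
    then show ?thesis using a by simp
  qed
qed simp

locale LDset =
  fixes N n :: nat and p :: "nat \<Rightarrow> real" and ori :: "nat \<Rightarrow> bool" and ident :: "nat \<Rightarrow> nat"
    and inp :: "nat \<Rightarrow> 'a"
    and mdl :: model and B :: "nat \<Rightarrow> nat" and d0 :: "'a \<Rightarrow> dir"
    and kf :: "'a \<Rightarrow> real list \<Rightarrow> nat \<Rightarrow> bool" and lf :: "'a \<Rightarrow> bool"
  assumes vc: "valid_config N n p ident"
begin

abbreviation "AL \<equiv> galg mdl B d0 kf lf"

definition sh where "sh t = fst (run AL N n p ori ident inp t)"
definition H where "H t = snd (run AL N n p ori ident inp t)"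
definition ch where "ch t i = AL N n (ident i) (inp i) (H t i)"
definition rr where "rr t = rot_index n ori (ch t)"
definition obs where "obs t i = own_dist (ori i) (p ((i + sh t) mod n)) (p ((i + sh t + rr t) mod n))"

lemma n_gt4: "4 < n" using vc by (simp add: valid_config_def)
lemma n_pos: "0 < n" using n_gt4 by simp
lemma p_range: "i < n \<Longrightarrow> 0 \<le> p i \<and> p i < 1" using vc by (simp add: valid_config_def)
lemma p_mono: "i < j \<Longrightarrow> j < n \<Longrightarrow> p i < p j" using vc by (simp add: valid_config_def)
lemma p_inj: "i < n \<Longrightarrow> j < n \<Longrightarrow> p i = p j \<Longrightarrow> i = j"
  using p_mono by (cases i j rule: linorder_cases) fastforce+

lemma run_Suc: "sh (Suc t) = (sh t + rr t) mod n \<and> H (Suc t) = (\<lambda>i. H t i @ [obs t i])"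
proof -
  obtain s h where e: "run AL N n p ori ident inp t = (s, h)" by (cases "run AL N n p ori ident inp t")
  then have "sh t = s" "H t = h" by (simp_all add: sh_def H_def)
  then show ?thesis using e
    unfolding sh_def H_def rr_def ch_def obs_def by (simp add: Let_def)
qed

lemma sh_Suc: "sh (Suc t) = (sh t + rr t) mod n" using run_Suc by blast
lemma H_Suc: "H (Suc t) i = H t i @ [obs t i]" using run_Suc by simp
lemma sh_0: "sh 0 = 0" by (simp add: sh_def)
lemma H_0: "H 0 i = []" by (simp add: H_def)

lemma sh_less: "sh t < n"
  by (cases t) (simp_all add: sh_0 n_pos sh_Suc)

lemma len_H: "length (H t i) = t"
  by (induction t) (simp_all add: H_0 H_Suc)

lemma take_H: "k \<le> t \<Longrightarrow> take k (H t i) = H k i"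
proof (induction t)
  case 0 then show ?case by (simp add: H_0)
next
  case (Suc t)
  show ?case
  proof (cases "k = Suc t")
    case True then show ?thesis by (simp add: len_H)
  next
    case False then have "k \<le> t" using Suc by simp
    then show ?thesis using Suc by (simp add: H_Suc len_H)
  qed
qed

lemma nth_H: "k < t \<Longrightarrow> H t i ! k = obs k i"
proof -
  assume k: "k < t"
  have "H t i ! k = take (Suc k) (H t i) ! k" using k by simp
  also have "\<dots> = H (Suc k) i ! k" using k by (simp add: take_H)
  also have "\<dots> = obs k i" by (simp add: H_Suc nth_append len_H)
  finally show ?thesis .
qed

lemma sum_H: "sum_list (H t i) = (\<Sum>k<t. obs k i)"
  by (induction t) (simp_all add: H_0 H_Suc)

lemma own_dist_zero: "a < n \<Longrightarrow> b < n \<Longrightarrow> own_dist o' (p a) (p b) = 0 \<longleftrightarrow> a = b"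
proof
  assume a: "a < n" "b < n" and z: "own_dist o' (p a) (p b) = 0"
  have "frac (p b - p a) = 0 \<or> frac (p a - p b) = 0" using z by (auto simp: own_dist_def split: if_splits)
  then have "p b - p a \<in> \<int> \<or> p a - p b \<in> \<int>" by (simp add: frac_eq_0_iff)
  then obtain k :: int where k: "p b - p a = of_int k \<or> p a - p b = of_int k" by (auto elim: Ints_cases)
  have "\<bar>p b - p a\<bar> < 1" using p_range[OF a(1)] p_range[OF a(2)] by auto
  then have "k = 0" using k by auto
  then have "p a = p b" using k by auto
  then show "a = b" using p_inj a by blast
qed (simp add: own_dist_def)

lemma pos_H: "i < n \<Longrightarrow> frac (sum_list (H t i)) = own_dist (ori i) (p i) (p ((i + sh t) mod n))"
proof (induction t)
  case 0 then show ?case by (simp add: H_0 sh_0 own_dist_def)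
next
  case (Suc t)
  have "frac (sum_list (H (Suc t) i)) = frac (frac (sum_list (H t i)) + obs t i)"
    by (simp add: H_Suc frac_add_simps)
  also have "\<dots> = frac (own_dist (ori i) (p i) (p ((i + sh t) mod n)) + obs t i)" using Suc by simp
  also have "\<dots> = own_dist (ori i) (p i) (p ((i + sh t + rr t) mod n))"
    unfolding obs_def by (rule own_dist_add[symmetric])
  also have "(i + sh t + rr t) mod n = (i + sh (Suc t)) mod n"
    by (simp add: sh_Suc mod_add_right_eq add.assoc)
  finally show ?case .
qed

lemma ret_iff: "i < n \<Longrightarrow> k \<le> t \<Longrightarrow> retk (H t i) k \<longleftrightarrow> sh k = 0"
proof -
  assume i: "i < n" and k: "k \<le> t"
  have "retk (H t i) k \<longleftrightarrow> own_dist (ori i) (p i) (p ((i + sh k) mod n)) = 0"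
    unfolding retk_def using take_H[OF k] pos_H[OF i] by simp
  also have "\<dots> \<longleftrightarrow> (i + sh k) mod n = i"
    using own_dist_zero[OF i, of "(i + sh k) mod n"] n_pos by auto
  also have "\<dots> \<longleftrightarrow> sh k = 0" using mod_add_self_iff[OF i sh_less] .
  finally show ?thesis .
qed

lemma rr_less: "rr t < n" unfolding rr_def using rot_less n_pos by blast

lemma obs_zero: "i < n \<Longrightarrow> obs t i = 0 \<longleftrightarrow> rr t = 0"
proof -
  assume i: "i < n"
  define x where "x = (i + sh t) mod n"
  have x: "x < n" using n_pos by (simp add: x_def)
  have e: "(i + sh t + rr t) mod n = (x + rr t) mod n" by (simp add: x_def mod_add_left_eq)
  have "obs t i = 0 \<longleftrightarrow> (x + rr t) mod n = x"
    unfolding obs_def e x_def[symmetric] using own_dist_zero[OF x, of "(x + rr t) mod n"] n_pos by auto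
  also have "\<dots> \<longleftrightarrow> rr t = 0" using mod_add_self_iff[OF x rr_less] .
  finally show ?thesis .
qed

end

context LDset begin

definition dd where "dd i = (if allowed mdl (d0 (inp i)) then d0 (inp i) else Right)"
definition r0 where "r0 = rot_index n ori dd"
definition mm where "mm = n div gcd r0 n"
definition keepg where "keepg i = kf (inp i) (H mm i) mm"
definition testc where "testc S b i = selc (i \<in> S \<and> bitof b (ident i)) (keepg i) mdl"

fun CC :: "nat \<Rightarrow> nat set" where
  "CC 0 = {i. i < n \<and> lf (inp i)}"
| "CC (Suc b) = (if rot_index n ori (testc (CC b) b) \<noteq> 0 then {i \<in> CC b. bitof b (ident i)} else CC b)"

definition stepc where "stepc i = selc (i \<in> CC (B N)) (keepg i) mdl"

definition act where
  "act t i = (if t < mm then dd i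
     else if t - mm < 2 * B N then
       (if even (t - mm) then testc (CC ((t - mm) div 2)) ((t - mm) div 2) i
        else rdir (testc (CC ((t - mm) div 2)) ((t - mm) div 2) i))
     else if (t - mm - 2 * B N) mod mm = 0 then stepc i else dd i)"

lemma r0_less: "r0 < n" unfolding r0_def using rot_less n_pos by blast

lemma g_pos: "0 < gcd r0 n" using n_pos by simp

lemma n_eq: "n = gcd r0 n * mm"
  unfolding mm_def by simp

lemma mm_pos: "0 < mm" using n_eq n_pos by (metis mult_0_right neq0_conv)

lemma mm_le: "mm \<le> n" unfolding mm_def by simp

lemma dvd_iff: "n dvd k * r0 \<longleftrightarrow> mm dvd k"
proof -
  define g where "g = gcd r0 n"
  define r' where "r' = r0 div g"
  have g: "0 < g" using g_pos by (simp add: g_def)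
  have r0e: "r0 = g * r'" by (simp add: r'_def g_def)
  have ne: "n = g * mm" using n_eq by (simp add: g_def)
  have cop: "coprime mm r'"
    unfolding mm_def r'_def g_def using div_gcd_coprime[of n r0] n_pos by (simp add: gcd.commute coprime_commute)
  have "n dvd k * r0 \<longleftrightarrow> g * mm dvd g * (k * r')" using ne r0e by (simp add: ac_simps)
  also have "\<dots> \<longleftrightarrow> mm dvd k * r'" using g by simp
  also have "\<dots> \<longleftrightarrow> mm dvd k" using cop by (simp add: coprime_dvd_mult_left_iff)
  finally show ?thesis .
qed

lemma mm_dvd: "n dvd mm * r0" using dvd_iff by simp

lemma act_test: "b < B N \<Longrightarrow> act (mm + 2 * b) = testc (CC b) b"
  by (rule ext) (simp add: act_def)

lemma act_rev: "b < B N \<Longrightarrow> act (mm + 2 * b + 1) = (\<lambda>i. rdir (testc (CC b) b i))"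
proof (rule ext)
  fix i assume b: "b < B N"
  have "(2 * b + 1) div 2 = b" by simp
  then show "act (mm + 2 * b + 1) i = rdir (testc (CC b) b i)" using b by (simp add: act_def)
qed

lemma ch_act: "\<forall>i<n. ch t i = act t i"
proof (induction t rule: less_induct)
  case (less t)
  have IH: "k < t \<Longrightarrow> i < n \<Longrightarrow> ch k i = act k i" for k i using less by blast
  have rrk: "k < t \<Longrightarrow> rr k = rot_index n ori (act k)" for k
    unfolding rr_def by (rule rot_cong) (simp add: IH)
  have sh1: "k \<le> t \<Longrightarrow> k \<le> mm \<Longrightarrow> sh k = (k * r0) mod n" for k
  proof (induction k)
    case 0 then show ?case by (simp add: sh_0)
  next
    case (Suc k)
    have "act k = dd" using Suc by (auto simp: act_def)
    then have "rr k = r0" using rrk[of k] Suc by (simp add: r0_def)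
    then show ?case using Suc by (simp add: sh_Suc mod_add_right_eq add.commute)
  qed
  have shz: "k \<le> t \<Longrightarrow> 0 < k \<Longrightarrow> k \<le> mm \<Longrightarrow> sh k = 0 \<longleftrightarrow> k = mm" for k
  proof -
    assume k: "k \<le> t" "0 < k" "k \<le> mm"
    have "sh k = 0 \<longleftrightarrow> n dvd k * r0" using sh1[OF k(1) k(3)] by (simp add: dvd_eq_mod_eq_0)
    also have "\<dots> \<longleftrightarrow> mm dvd k" by (rule dvd_iff)
    also have "\<dots> \<longleftrightarrow> k = mm" using k by (auto dest: dvd_imp_le)
    finally show ?thesis .
  qed
  show ?case
  proof (intro allI impI)
    fix i assume i: "i < n"
    define h where "h = H t i"
    have lh: "length h = t" by (simp add: h_def len_H)
    have hasm_iff: "hasm h \<longleftrightarrow> mm \<le> t"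
    proof
      assume "hasm h"
      then obtain k where k: "0 < k" "k \<le> t" "retk h k" unfolding hasm_def lh by blast
      then have "sh k = 0" using ret_iff[OF i] by (simp add: h_def)
      show "mm \<le> t"
      proof (rule ccontr)
        assume "\<not> mm \<le> t"
        then have "k < mm" using k by simp
        then show False using shz[of k] k \<open>sh k = 0\<close> by simp
      qed
    next
      assume "mm \<le> t"
      then have "retk h mm" using ret_iff[OF i] shz[of mm] mm_pos by (simp add: h_def)
      then show "hasm h" unfolding hasm_def lh using \<open>mm \<le> t\<close> mm_pos by blast
    qed
    have chh: "ch t i = galg mdl B d0 kf lf N n (ident i) (inp i) h" by (simp add: ch_def h_def)
    show "ch t i = act t i"
    proof (cases "t < mm")
      case True
      have nh: "\<not> hasm h" using hasm_iff True by simp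
      show ?thesis unfolding chh galg_nohasm[OF nh] using True
        by (simp add: act_def dd_def)
    next
      case False
      then have mt: "mm \<le> t" by simp
      have hm: "hasm h" using hasm_iff mt by simp
      have ml: "mloc h = mm" unfolding mloc_def lh
      proof (rule Least_equality)
        show "0 < mm \<and> mm \<le> t \<and> retk h mm"
          using mt ret_iff[OF i] shz[of mm] mm_pos by (simp add: h_def)
      next
        fix k assume k: "0 < k \<and> k \<le> t \<and> retk h k"
        show "mm \<le> k"
        proof (rule ccontr)
          assume nk: "\<not> mm \<le> k"
          have "sh k = 0" using k ret_iff[OF i, of k t] by (simp add: h_def)
          then show False using shz[of k] k nk by simp
        qed
      qed
      have kp: "kf (inp i) (take mm h) mm = keepg i" using mt by (simp add: h_def take_H keepg_def)
      have inC_eq: "b \<le> B N \<Longrightarrow> mm + 2 * b \<le> t \<Longrightarrow> inC h mm (ident i) (lf (inp i)) b \<longleftrightarrow> i \<in> CC b" for b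
      proof (induction b)
        case 0 then show ?case using i by simp
      next
        case (Suc b)
        have bl: "b < B N" using Suc by simp
        have lt: "mm + 2 * b < t" using Suc by simp
        have "h ! (mm + 2 * b) = obs (mm + 2 * b) i" using lt by (simp add: h_def nth_H)
        then have "h ! (mm + 2 * b) \<noteq> 0 \<longleftrightarrow> rot_index n ori (testc (CC b) b) \<noteq> 0"
          using obs_zero[OF i] rrk[OF lt] act_test[OF bl] by simp
        then show ?case using Suc by auto
      qed
      show ?thesis
      proof (cases "t - mm < 2 * B N")
        case True
        have b: "(t - mm) div 2 \<le> B N" "mm + 2 * ((t - mm) div 2) \<le> t" using True mt by auto
        have ie: "inC h mm (ident i) (lf (inp i)) ((t - mm) div 2) \<longleftrightarrow> i \<in> CC ((t - mm) div 2)"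
          using inC_eq[OF b] .
        show ?thesis unfolding chh galg_test[where B=B and N=N and mdl=mdl and kf=kf and lf=lf and n=n and x="ident i" and a="inp i", OF hm ml lh True] kp ie
          using True mt by (simp add: act_def testc_def)
      next
        case False
        have ie: "inC h mm (ident i) (lf (inp i)) (B N) \<longleftrightarrow> i \<in> CC (B N)"
          using inC_eq[of "B N"] False mt by simp
        show ?thesis unfolding chh galg_ph3[where B=B and N=N and mdl=mdl and kf=kf and lf=lf and n=n and x="ident i" and a="inp i", OF hm ml lh False] kp ie
          using False mt by (simp add: act_def stepc_def dd_def)
      qed
    qed
  qed
qed

lemma rr_act: "rr t = rot_index n ori (act t)"
  unfolding rr_def by (rule rot_cong) (simp add: ch_act)

lemma sh_ph1: "k \<le> mm \<Longrightarrow> sh k = (k * r0) mod n"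
proof (induction k)
  case 0 then show ?case by (simp add: sh_0)
next
  case (Suc k)
  have "act k = dd" using Suc by (auto simp: act_def)
  then have "rr k = r0" by (simp add: rr_act r0_def)
  then show ?case using Suc by (simp add: sh_Suc mod_add_right_eq add.commute)
qed

lemma sh_mm: "sh mm = 0"
  using sh_ph1[of mm] mm_dvd by (simp add: dvd_eq_mod_eq_0)

lemma sh_ph2: "b \<le> B N \<Longrightarrow> sh (mm + 2 * b) = 0"
proof (induction b)
  case 0 then show ?case by (simp add: sh_mm)
next
  case (Suc b)
  then have bl: "b < B N" by simp
  have "sh (mm + 2 * Suc b) = ((sh (mm + 2 * b) + rr (mm + 2 * b)) mod n + rr (mm + 2 * b + 1)) mod n"
    by (simp add: sh_Suc[symmetric])
  also have "\<dots> = (rr (mm + 2 * b) + rr (mm + 2 * b + 1)) mod n"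
    using Suc bl rr_less by simp
  also have "\<dots> = 0"
    unfolding rr_act act_test[OF bl] act_rev[OF bl] using rot_rdir n_pos by blast
  finally show ?case .
qed

definition sv where "sv = rot_index n ori stepc"

fun PP :: "nat \<Rightarrow> nat" where
  "PP 0 = 0"
| "PP (Suc q) = (PP q + (if q mod mm = 0 then sv else r0)) mod n"

lemma sh_ph3: "sh (mm + 2 * B N + q) = PP q"
proof (induction q)
  case 0 then show ?case using sh_ph2[of "B N"] by simp
next
  case (Suc q)
  have "act (mm + 2 * B N + q) = (if q mod mm = 0 then stepc else dd)"
    by (rule ext) (simp add: act_def)
  then have "rr (mm + 2 * B N + q) = (if q mod mm = 0 then sv else r0)"
    by (simp add: rr_act sv_def r0_def)
  then show ?case using Suc by (simp add: sh_Suc)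
qed

end

lemma find_a0k:
  fixes n r sv j :: nat
  assumes n: "0 < n" and cop: "coprime sv n"
  defines "g \<equiv> gcd r n"
  defines "mm \<equiv> n div g"
  shows "\<exists>a0 k. a0 < g \<and> k < mm \<and> int n dvd int j - (int a0 * int sv + int k * int r)"
proof -
  have g: "0 < g" using n by (simp add: g_def)
  have ne: "n = g * mm" by (simp add: mm_def g_def)
  have mm: "0 < mm" using ne n by (cases mm) auto
  have gn: "g dvd n" by (simp add: g_def)
  have copg: "coprime sv g" by (rule coprime_divisors[OF dvd_refl gn cop])
  then have "gcd (int sv) (int g) = 1" by (simp add: coprime_int_iff gcd_int_def)
  then obtain u v :: int where uv: "u * int sv + v * int g = 1" using bezout_int[of "int sv" "int g"] by metis
  define a0 :: int where "a0 = (int j * u) mod int g"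
  have a0r: "0 \<le> a0" "a0 < int g" using g by (simp_all add: a0_def)
  obtain w where w: "int j * u = a0 + int g * w" unfolding a0_def by (metis mod_div_mult_eq add.commute mult.commute)
  have e1: "int j * u * int sv = (a0 + int g * w) * int sv" using w by simp
  have "int j = int j * (u * int sv + v * int g)" using uv by simp
  also have "\<dots> = int j * u * int sv + int j * v * int g" by (simp add: algebra_simps)
  also have "\<dots> = (a0 + int g * w) * int sv + int j * v * int g" using e1 by simp
  finally have "int j - a0 * int sv = int g * (w * int sv + int j * v)" by (simp add: algebra_simps)
  then obtain c where c: "int j - a0 * int sv = int g * c" by blast
  obtain x y :: int where xy: "x * int r + y * int n = int g"
    using bezout_int[of "int r" "int n"] by (auto simp: g_def gcd_int_def)
  define K where "K = c * x"
  have KK: "int j = a0 * int sv + K * int r + c * y * int n"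
  proof -
    have "K * int r = c * (x * int r)" by (simp add: K_def algebra_simps)
    also have "\<dots> = c * (int g - y * int n)" using xy by (metis add_diff_cancel_right')
    finally have "K * int r = c * (int g - y * int n)" .
    then show ?thesis using c by (simp add: algebra_simps)
  qed
  define k where "k = K mod int mm"
  have kr: "0 \<le> k" "k < int mm" using mm by (simp_all add: k_def)
  obtain z where z: "K = k + int mm * z" unfolding k_def by (metis mod_div_mult_eq add.commute mult.commute)
  have rr: "r = g * (r div g)" by (simp add: g_def)
  have mr: "int mm * int r = int n * int (r div g)"
  proof -
    have "mm * r = n * (r div g)" using ne rr by (metis mult.assoc mult.commute)
    then show ?thesis by (metis of_nat_mult)
  qed
  have "int j - (a0 * int sv + k * int r) = int n * (z * int (r div g) + c * y)"
    using KK z mr by (simp add: algebra_simps)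
  then have "int n dvd int j - (a0 * int sv + k * int r)" by simp
  then show ?thesis using a0r kr
    by (intro exI[of _ "nat a0"] exI[of _ "nat k"]) auto
qed

lemma modeq_nat: "j < (n::nat) \<Longrightarrow> int n dvd int j - int X \<Longrightarrow> X mod n = j"
proof -
  assume j: "j < n" and d: "int n dvd int j - int X"
  have "int j mod int n = int X mod int n" using d by (simp add: mod_eq_dvd_iff)
  then have "int j = int (X mod n)" using j by (simp add: of_nat_mod[symmetric])
  then show ?thesis by simp
qed

lemma coverage:
  fixes n r sv mm :: nat and PP :: "nat \<Rightarrow> nat"
  assumes n: "0 < n" and cop: "coprime sv n"
    and mmd: "mm = n div gcd r n"
    and P0: "PP 0 = 0" and PS: "\<And>q. PP (Suc q) = (PP q + (if q mod mm = 0 then sv else r)) mod n"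
    and j: "j < n"
  shows "(\<exists>k<mm. (k * r) mod n = j) \<or> (\<exists>q \<le> n - mm. PP q = j)"
proof -
  define g where "g = gcd r n"
  have g: "0 < g" using n by (simp add: g_def)
  have ne: "n = g * mm" by (simp add: mmd g_def)
  have mm: "0 < mm" using ne n by (cases mm) auto
  have rr: "r = g * (r div g)" by (simp add: g_def)
  have mr: "int mm * int r = int n * int (r div g)"
  proof -
    have "mm * r = n * (r div g)" using ne rr by (metis mult.assoc mult.commute)
    then show ?thesis by (metis of_nat_mult)
  qed
  have blkS: "PP (a * mm + 1 + b) = ((a + 1) * sv + (a * (mm - 1) + b) * r) mod n"
    if S: "PP (a * mm) = (a * sv + a * (mm - 1) * r) mod n" and b: "b < mm" for a b
    using b
  proof (induction b)
    case 0
    have "PP (a * mm + 1 + 0) = (PP (a * mm) + sv) mod n" using PS[of "a * mm"] by simp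
    also have "\<dots> = ((a * sv + a * (mm - 1) * r) + sv) mod n" using S by (simp add: mod_add_left_eq)
    also have "\<dots> = ((a + 1) * sv + (a * (mm - 1) + 0) * r) mod n" by (simp add: algebra_simps)
    finally show ?case .
  next
    case (Suc b)
    have nz: "(a * mm + 1 + b) mod mm \<noteq> 0"
    proof -
      have "(a * mm + 1 + b) mod mm = (1 + b) mod mm" by (simp add: add.assoc)
      also have "\<dots> = 1 + b" using Suc by simp
      finally show ?thesis by simp
    qed
    have "PP (a * mm + 1 + Suc b) = PP (Suc (a * mm + 1 + b))" by simp
    also have "\<dots> = (PP (a * mm + 1 + b) + r) mod n" using PS nz by simp
    also have "\<dots> = (((a + 1) * sv + (a * (mm - 1) + b) * r) + r) mod n"
      using Suc by (simp add: mod_add_left_eq)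
    also have "\<dots> = ((a + 1) * sv + (a * (mm - 1) + Suc b) * r) mod n" by (simp add: algebra_simps)
    finally show ?case .
  qed
  have S: "PP (a * mm) = (a * sv + a * (mm - 1) * r) mod n" for a
  proof (induction a)
    case 0 then show ?case using P0 by simp
  next
    case (Suc a)
    have e: "Suc a * mm = a * mm + 1 + (mm - 1)" using mm by simp
    have "PP (Suc a * mm) = PP (a * mm + 1 + (mm - 1))" by (simp only: e)
    also have "\<dots> = ((a + 1) * sv + (a * (mm - 1) + (mm - 1)) * r) mod n"
      by (rule blkS[OF Suc]) (use mm in simp)
    also have "\<dots> = (Suc a * sv + Suc a * (mm - 1) * r) mod n"
    proof -
      have "\<And>x. (a + 1) * sv + (a * x + x) * r = Suc a * sv + Suc a * x * r" by (simp add: algebra_simps)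
      then show ?thesis by (simp only:)
    qed
    finally show ?case .
  qed
  obtain a0 k where ak0: "a0 < gcd r n" "k < n div gcd r n" "int n dvd int j - (int a0 * int sv + int k * int r)"
    using find_a0k[OF n cop, of r j] by blast
  have ak: "a0 < g" "k < mm" "int n dvd int j - (int a0 * int sv + int k * int r)"
    using ak0 by (simp_all add: g_def mmd)
  show ?thesis
  proof (cases "a0 = 0")
    case True
    then have "int n dvd int j - int (k * r)" using ak by simp
    then have "(k * r) mod n = j" using modeq_nat[OF j] by blast
    then show ?thesis using ak by blast
  next
    case False
    define a where "a = a0 - 1"
    define b where "b = (k + a) mod mm"
    have b: "b < mm" using mm by (simp add: b_def)
    define q where "q = a * mm + 1 + b"
    have "q \<le> a * mm + mm" using b by (simp add: q_def)
    also have "\<dots> = a0 * mm"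
    proof -
      have a0e: "a0 = a + 1" using False by (simp add: a_def)
      show ?thesis by (simp add: a0e algebra_simps)
    qed
    also have "\<dots> \<le> (g - 1) * mm" using ak(1) by (intro mult_le_mono1) simp
    also have "\<dots> = n - mm" using ne by (simp add: algebra_simps)
    finally have qle: "q \<le> n - mm" .
    have PQ: "PP q = ((a + 1) * sv + (a * (mm - 1) + b) * r) mod n"
      unfolding q_def using blkS[OF S b] .
    define d where "d = (k + a) div mm"
    have d: "k + a = b + mm * d" using mod_mult_div_eq[of "k + a" mm] by (simp add: b_def d_def)
    define X where "X = a * (mm - 1) + b"
    have d': "int k + int a = int b + int mm * int d" using arg_cong[OF d, of int] by simp
    have am: "int (a * (mm - 1)) = int a * int mm - int a" using mm by (simp add: of_nat_diff right_diff_distrib)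
    have z: "int X - int k = int mm * (int a - int d)"
      unfolding X_def of_nat_add am using d' by (simp add: algebra_simps)
    have a0e: "int a0 = int a + 1" using False by (simp add: a_def)
    have "int ((a + 1) * sv + X * r) - (int a0 * int sv + int k * int r) = (int X - int k) * int r"
      unfolding a0e by (simp add: algebra_simps)
    also have "\<dots> = int n * (int (r div g) * (int a - int d))" unfolding z using mr by (simp add: algebra_simps)
    finally have X: "int n dvd int ((a + 1) * sv + X * r) - (int a0 * int sv + int k * int r)"
      by simp
    have "int j - int ((a + 1) * sv + X * r) =
       (int j - (int a0 * int sv + int k * int r)) - (int ((a + 1) * sv + X * r) - (int a0 * int sv + int k * int r))"
      by simp
    then have "int n dvd int j - int ((a + 1) * sv + X * r)"
      by (simp only:) (rule dvd_diff[OF ak(3) X])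
    then have "PP q = j" unfolding PQ X_def[symmetric] using modeq_nat[OF j] by blast
    then show ?thesis using qle by blast
  qed
qed

lemma ctr_cwf: "ctr o' (cwf kp) = (if o' = kp then 1 else -1)"
  by (auto simp: ctr_def cwf_def obj_cw_def obj_acw_def)

lemma ctr_offf: "ctr o' (offf mdl kp) = (if mdl = Lazy then 0 else - ctr o' (cwf kp))"
  by (cases kp; cases o'; cases mdl) (simp_all add: offf_def cwf_def rdir_def ctr_def obj_cw_def obj_acw_def)

lemma ctr_selc: "ctr o' (selc c kp mdl) = (if c then ctr o' (cwf kp) else ctr o' (offf mdl kp))"
  by (simp add: selc_def)

lemma sum_if_set:
  assumes "S \<subseteq> {..<(n::nat)}"
  shows "(\<Sum>i<n. if i \<in> S then a else b) = int (card S) * a + int (n - card S) * (b::int)"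
proof -
  have f: "finite {..<n}" by simp
  have "(\<Sum>i<n. if i \<in> S then a else b) = (\<Sum>i\<in>{..<n} \<inter> {x. x \<in> S}. a) + (\<Sum>i\<in>{..<n} \<inter> - {x. x \<in> S}. b)"
    by (rule sum.If_cases[OF f])
  also have "{..<n} \<inter> {x. x \<in> S} = S" using assms by auto
  also have "{..<n} \<inter> - {x. x \<in> S} = {..<n} - S" by auto
  finally have e: "(\<Sum>i<n. if i \<in> S then a else b) = (\<Sum>i\<in>S. a) + (\<Sum>i\<in>{..<n} - S. b)" .
  have c: "card ({..<n} - S) = n - card S" using assms by (simp add: card_Diff_subset finite_subset)
  show ?thesis unfolding e using c by simp
qed

lemma dvd_range_int: "0 \<le> c \<Longrightarrow> c \<le> int n \<Longrightarrow> 0 < n \<Longrightarrow> (int n dvd c \<longleftrightarrow> c = 0 \<or> c = int n)"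
proof
  assume a: "0 \<le> c" "c \<le> int n" "0 < n" and d: "int n dvd c"
  then obtain k where k: "c = int n * k" by (metis dvdE)
  have "0 \<le> k" using a k by (simp add: zero_le_mult_iff)
  moreover have "k \<le> 1"
  proof -
    have "int n * k \<le> int n * 1" using a k by simp
    then show ?thesis using a by (simp add: mult_le_cancel_left_pos)
  qed
  ultimately have "k = 0 \<or> k = 1" by linarith
  then show "c = 0 \<or> c = int n" using k by auto
qed auto

lemma bits_eq: "x < 2 ^ B \<Longrightarrow> y < 2 ^ B \<Longrightarrow> (\<forall>c<B. bitof c x = bitof c y) \<Longrightarrow> x = y"
proof (induction B arbitrary: x y)
  case 0 then show ?case by simp
next
  case (Suc B)
  have "x div 2 < 2 ^ B" "y div 2 < 2 ^ B" using Suc.prems by auto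
  moreover have "\<forall>c<B. bitof c (x div 2) = bitof c (y div 2)"
  proof (intro allI impI)
    fix c assume "c < B"
    then have "bitof (Suc c) x = bitof (Suc c) y" using Suc.prems by auto
    then show "bitof c (x div 2) = bitof c (y div 2)" by (simp add: bitof_def div_mult2_eq)
  qed
  ultimately have "x div 2 = y div 2" using Suc.IH by blast
  moreover have "odd x = odd y" using Suc.prems(3) by (auto simp: bitof_def)
  moreover have "x mod 2 = y mod 2" using \<open>odd x = odd y\<close> by (simp add: mod2_eq_if)
  moreover have "x = 2 * (x div 2) + x mod 2" "y = 2 * (y div 2) + y mod 2" by simp_all
  ultimately show ?case by simp
qed

context LDset begin

lemma p_le: "a \<le> b \<Longrightarrow> b < n \<Longrightarrow> p a \<le> p b"
  using p_mono by (cases "a = b") (auto simp: less_le)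

lemma CC_sub: "CC b \<subseteq> {..<n}"
  by (induction b) auto

lemma cfg_sum:
  assumes DA: "\<forall>i<n. (ori i = keepg i) = \<kappa>" and S: "S \<subseteq> {..<n}"
  shows "(\<Sum>i<n. ctr (ori i) (selc (i \<in> S) (keepg i) mdl)) =
     (if \<kappa> then 1 else -1) * (int (card S) - (if mdl = Lazy then 0 else int (n - card S)))"
proof -
  have "(\<Sum>i<n. ctr (ori i) (selc (i \<in> S) (keepg i) mdl)) =
        (\<Sum>i<n. if i \<in> S then (if \<kappa> then 1 else -1) else (if mdl = Lazy then 0 else - (if \<kappa> then 1 else -1)))"
    using DA by (intro sum.cong) (auto simp: ctr_selc ctr_offf ctr_cwf)
  also have "\<dots> = int (card S) * (if \<kappa> then 1 else -1) + int (n - card S) * (if mdl = Lazy then 0 else - (if \<kappa> then 1 else -1))"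
    by (rule sum_if_set[OF S])
  finally show ?thesis by (auto simp: algebra_simps)
qed

lemma cfg_zero:
  assumes DA: "\<forall>i<n. (ori i = keepg i) = \<kappa>" and S: "S \<subseteq> {..<n}" and mdlc: "mdl = Lazy \<or> odd n"
  shows "rot_index n ori (\<lambda>i. selc (i \<in> S) (keepg i) mdl) = 0 \<longleftrightarrow> card S = 0 \<or> card S = n"
proof -
  have cS: "card S \<le> n" using card_mono[OF finite_lessThan S] by simp
  have "rot_index n ori (\<lambda>i. selc (i \<in> S) (keepg i) mdl) = 0 \<longleftrightarrow>
        int n dvd (int (card S) - (if mdl = Lazy then 0 else int (n - card S)))"
    using rot_zero_iff[OF n_pos] cfg_sum[OF DA S] by (simp add: dvd_mult_unit_iff')
  also have "\<dots> \<longleftrightarrow> int n dvd int (card S)"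
  proof (cases "mdl = Lazy")
    case True then show ?thesis by simp
  next
    case False
    then have on: "odd n" using mdlc by simp
    have e: "int (card S) - int (n - card S) = 2 * int (card S) - int n" using cS by (simp add: of_nat_diff)
    have "int n dvd 2 * int (card S) - int n \<longleftrightarrow> int n dvd 2 * int (card S)"
      using dvd_add_right_iff[of "int n" "int n" "2 * int (card S) - int n"] by simp
    also have "\<dots> \<longleftrightarrow> int n dvd int (card S)"
    proof -
      have "coprime (int n) 2" using on by simp
      then show ?thesis by (simp add: coprime_dvd_mult_right_iff)
    qed
    finally show ?thesis using False e by simp
  qed
  also have "\<dots> \<longleftrightarrow> card S = 0 \<or> card S = n"
    using dvd_range_int[of "int (card S)" n] cS n_pos by simp
  finally show ?thesis .
qed

lemma test_zero:
  assumes DA: "\<forall>i<n. (ori i = keepg i) = \<kappa>" and mdlc: "mdl = Lazy \<or> odd n"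
  shows "rot_index n ori (testc (CC b) b) = 0 \<longleftrightarrow>
     card {i \<in> CC b. bitof b (ident i)} = 0 \<or> card {i \<in> CC b. bitof b (ident i)} = n"
proof -
  have S: "{i \<in> CC b. bitof b (ident i)} \<subseteq> {..<n}" using CC_sub by blast
  have "testc (CC b) b = (\<lambda>i. selc (i \<in> {i \<in> CC b. bitof b (ident i)}) (keepg i) mdl)"
    by (rule ext) (simp add: testc_def)
  then show ?thesis using cfg_zero[OF DA S mdlc] by simp
qed

lemma LE_tests:
  assumes DA: "\<forall>i<n. (ori i = keepg i) = \<kappa>" and mdlc: "mdl = Lazy \<or> odd n"
    and all: "\<forall>i<n. lf (inp i)" and small: "\<forall>i<n. ident i < 2 ^ B N"
  shows "card (CC (B N)) = 1"
proof -
  have inj: "inj_on ident {..<n}" using vc by (simp add: valid_config_def)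
  have inv: "CC b \<noteq> {} \<and> (\<forall>i\<in>CC b. \<forall>j\<in>CC b. \<forall>c<b. bitof c (ident i) = bitof c (ident j))" for b
  proof (induction b)
    case 0
    have "0 \<in> CC 0" using all n_pos by simp
    then have "CC 0 \<noteq> {}" by blast
    then show ?case by simp
  next
    case (Suc b)
    define S where "S = {i \<in> CC b. bitof b (ident i)}"
    have SC: "S \<subseteq> CC b" by (auto simp: S_def)
    have IH: "\<And>i j c. i \<in> CC b \<Longrightarrow> j \<in> CC b \<Longrightarrow> c < b \<Longrightarrow> bitof c (ident i) = bitof c (ident j)"
      using Suc.IH by blast
    have fS: "finite S" using CC_sub finite_subset[of S "{..<n}"] by (auto simp: S_def)
    have Ssub: "S \<subseteq> {..<n}" using CC_sub by (auto simp: S_def)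
    show ?case
    proof (cases "rot_index n ori (testc (CC b) b) \<noteq> 0")
      case True
      then have "card S \<noteq> 0" using test_zero[OF DA mdlc, of b] by (simp add: S_def)
      then have ne: "S \<noteq> {}" by auto
      have cc: "CC (Suc b) = S" using True by (simp add: S_def)
      have ag: "\<forall>i\<in>S. \<forall>j\<in>S. \<forall>c<Suc b. bitof c (ident i) = bitof c (ident j)"
      proof (intro ballI allI impI)
        fix i j c assume ij: "i \<in> S" "j \<in> S" and c: "c < Suc b"
        show "bitof c (ident i) = bitof c (ident j)"
        proof (cases "c = b")
          case True then show ?thesis using ij by (simp add: S_def)
        next
          case False then have "c < b" using c by simp
          then show ?thesis using IH ij SC by blast
        qed
      qed
      show ?thesis unfolding cc by (rule conjI[OF ne ag])
    next
      case False
      then have cc: "CC (Suc b) = CC b" by simp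
      have "card S = 0 \<or> card S = n" using False test_zero[OF DA mdlc, of b] by (simp add: S_def)
      then have agree: "\<forall>i\<in>CC b. \<forall>j\<in>CC b. bitof b (ident i) = bitof b (ident j)"
      proof
        assume "card S = 0"
        then have "S = {}" using fS by simp
        then have "\<not> bitof b (ident i)" if "i \<in> CC b" for i using that by (auto simp: S_def)
        then show ?thesis by blast
      next
        assume "card S = n"
        then have "S = {..<n}" using card_subset_eq[OF finite_lessThan Ssub] by simp
        have "bitof b (ident i)" if "i \<in> CC b" for i
        proof -
          have "i < n" using that CC_sub by blast
          then have "i \<in> S" using \<open>S = {..<n}\<close> by simp
          then show ?thesis by (simp add: S_def)
        qed
        then show ?thesis by blast
      qed
      have ag: "\<forall>i\<in>CC b. \<forall>j\<in>CC b. \<forall>c<Suc b. bitof c (ident i) = bitof c (ident j)"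
      proof (intro ballI allI impI)
        fix i j c assume ij: "i \<in> CC b" "j \<in> CC b" and c: "c < Suc b"
        show "bitof c (ident i) = bitof c (ident j)"
        proof (cases "c = b")
          case True then show ?thesis using ij agree by blast
        next
          case False then have "c < b" using c by simp
          then show ?thesis using IH ij by blast
        qed
      qed
      have ne: "CC b \<noteq> {}" using Suc.IH by (rule conjunct1)
      show ?thesis unfolding cc by (rule conjI[OF ne ag])
    qed
  qed
  obtain x where x: "x \<in> CC (B N)" using inv[of "B N"] by auto
  have "CC (B N) = {x}"
  proof
    show "CC (B N) \<subseteq> {x}"
    proof
      fix y assume y: "y \<in> CC (B N)"
      have xn: "x < n" "y < n" using x y CC_sub by auto
      have ab: "\<forall>c<B N. bitof c (ident x) = bitof c (ident y)" using inv[of "B N"] x y by blast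
      have "ident x = ident y"
        by (rule bits_eq[OF _ _ ab]) (use small xn in auto)
      then have "x = y" using inj xn by (auto dest: inj_onD)
      then show "y \<in> {x}" by simp
    qed
  qed (use x in simp)
  then show ?thesis by simp
qed

lemma sv_coprime:
  assumes DA: "mdl = Basic \<Longrightarrow> \<forall>i<n. (ori i = keepg i) = \<kappa>" and mdlc: "mdl = Lazy \<or> odd n"
    and LE: "card (CC (B N)) = 1"
  shows "coprime sv n"
proof -
  obtain L where L: "CC (B N) = {L}" using LE card_1_singletonE by blast
  have Ln: "L < n" using L CC_sub by auto
  have stepc_eq: "stepc = (\<lambda>i. selc (i \<in> {L}) (keepg i) mdl)"
    by (rule ext) (simp add: stepc_def L)
  define s where "s = (\<Sum>i<n. ctr (ori i) (stepc i))"
  have ss: "s = 1 \<or> s = -1 \<or> s = 2 - int n \<or> s = int n - 2"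
  proof (cases "mdl = Lazy")
    case True
    have "s = (\<Sum>i<n. if i = L then ctr (ori L) (cwf (keepg L)) else 0)"
      unfolding s_def stepc_eq using True by (intro sum.cong) (auto simp: ctr_selc ctr_offf)
    also have "\<dots> = ctr (ori L) (cwf (keepg L))" using Ln by simp
    finally show ?thesis by (simp add: ctr_cwf)
  next
    case False
    then have "mdl = Basic" by (cases mdl) auto
    then have D: "\<forall>i<n. (ori i = keepg i) = \<kappa>" using DA by simp
    have "s = (if \<kappa> then 1 else -1) * (int (card {L}) - int (n - card {L}))"
      unfolding s_def stepc_eq using cfg_sum[OF D, of "{L}"] Ln False by simp
    then show ?thesis using n_pos by (auto simp: of_nat_diff)
  qed
  have "coprime s (int n)"
  proof -
    have c2: "mdl \<noteq> Lazy \<Longrightarrow> coprime 2 (int n)" using mdlc by simp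
    have "coprime (2 - int n) (int n) \<longleftrightarrow> coprime 2 (int n)"
      by (simp add: coprime_iff_gcd_eq_1 gcd_diff1)
    moreover have "coprime (int n - 2) (int n) \<longleftrightarrow> coprime (2 - int n) (int n)"
      using coprime_minus_left_iff[of "2 - int n" "int n"] by simp
    moreover have "mdl = Lazy \<Longrightarrow> s = 1 \<or> s = -1"
    proof -
      assume "mdl = Lazy"
      show "s = 1 \<or> s = -1"
      proof -
        have "s = (\<Sum>i<n. if i = L then ctr (ori L) (cwf (keepg L)) else 0)"
          unfolding s_def stepc_eq using \<open>mdl = Lazy\<close> by (intro sum.cong) (auto simp: ctr_selc ctr_offf)
        also have "\<dots> = ctr (ori L) (cwf (keepg L))" using Ln by simp
        finally show ?thesis by (simp add: ctr_cwf)
      qed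
    qed
    ultimately show ?thesis using ss c2 by (cases "mdl = Lazy") auto
  qed
  then have "coprime (s mod int n) (int n)" using n_pos by simp
  moreover have "int sv = s mod int n" unfolding sv_def s_def using rot_int[OF n_pos] by simp
  ultimately have "coprime (int sv) (int n)" by simp
  then show ?thesis by simp
qed

end

definition windk :: "'a \<Rightarrow> real list \<Rightarrow> nat \<Rightarrow> bool" where
  "windk a h m = (2 * sum_list h < real m)"

definition outf :: "real list \<Rightarrow> real set" where
  "outf h = {frac (sum_list (take k h)) | k. k \<le> length h} - {0}"

context LDset begin

lemma rr_ph1: "k < mm \<Longrightarrow> rr k = r0"
proof -
  assume k: "k < mm"
  have "act k = dd" using k by (auto simp: act_def)
  then show ?thesis by (simp add: rr_act r0_def)
qed

lemma obs_ph1: "k < mm \<Longrightarrow> obs k i = own_dist (ori i) (p ((i + k * r0) mod n)) (p ((i + Suc k * r0) mod n))"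
proof -
  assume k: "k < mm"
  have s: "sh k = (k * r0) mod n" using k by (simp add: sh_ph1)
  have r: "rr k = r0" using k by (rule rr_ph1)
  have e1: "(i + sh k) mod n = (i + k * r0) mod n" unfolding s by (simp add: mod_add_right_eq)
  have "(i + sh k + rr k) mod n = (i + r0 + (k * r0) mod n) mod n" unfolding s r by (simp add: ac_simps)
  also have "\<dots> = (i + r0 + k * r0) mod n" by (simp add: mod_add_right_eq)
  also have "\<dots> = (i + Suc k * r0) mod n" by (simp add: ac_simps)
  finally show ?thesis unfolding obs_def e1 by simp
qed

lemma wind_sum:
  assumes r0nz: "r0 \<noteq> 0" and i: "i < n"
  shows "\<exists>W. real n * W = real mm * real r0 \<and> sum_list (H mm i) = (if ori i then W else real mm - W)"
proof -
  define x where "x k = (i + k * r0) mod n" for k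
  define wr where "wr k = (if x k + r0 < n then 0 else 1::nat)" for k
  have xl: "x k < n" for k using n_pos by (simp add: x_def)
  have xS: "x (Suc k) = (x k + r0) mod n" for k
  proof -
    have "(x k + r0) mod n = (i + k * r0 + r0) mod n" by (simp add: x_def mod_add_left_eq)
    then show ?thesis by (simp add: x_def ac_simps)
  qed
  have hx: "int (x (Suc k)) = int (x k) + int r0 - int n * int (wr k)" for k
  proof (cases "x k + r0 < n")
    case True then show ?thesis by (simp add: xS wr_def)
  next
    case False
    then have "(x k + r0) mod n = x k + r0 - n" using xl[of k] r0_less by (simp add: le_mod_geq)
    then show ?thesis using False by (simp add: xS wr_def of_nat_diff)
  qed
  have neq: "x (Suc k) \<noteq> x k" for k using mod_add_self_iff[OF xl r0_less] r0nz by (simp add: xS)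
  have stepT: "own_dist True (p (x k)) (p (x (Suc k))) = p (x (Suc k)) - p (x k) + real (wr k)" for k
  proof (cases "x k + r0 < n")
    case True
    then have e: "x (Suc k) = x k + r0" by (simp add: xS)
    have "0 \<le> p (x (Suc k)) - p (x k)" using p_le[of "x k" "x (Suc k)"] e xl True by simp
    moreover have "p (x (Suc k)) - p (x k) < 1" using p_range[OF xl[of "Suc k"]] p_range[OF xl[of k]] by simp
    ultimately show ?thesis using True by (simp add: own_dist_def wr_def frac_eq)
  next
    case False
    then have e: "x (Suc k) = x k + r0 - n" using xl[of k] r0_less by (simp add: xS le_mod_geq)
    then have lt: "x (Suc k) < x k" using r0_less False by simp
    have "p (x (Suc k)) < p (x k)" using p_mono[OF lt xl] .
    moreover have "-1 < p (x (Suc k)) - p (x k)" using p_range[OF xl[of "Suc k"]] p_range[OF xl[of k]] by simp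
    ultimately have "frac (p (x (Suc k)) - p (x k) + 1) = p (x (Suc k)) - p (x k) + 1" by (simp add: frac_eq)
    then show ?thesis using False by (simp add: own_dist_def wr_def frac_1_eq)
  qed
  have stepF: "own_dist False (p (x k)) (p (x (Suc k))) = 1 - own_dist True (p (x k)) (p (x (Suc k)))" for k
  proof -
    have "own_dist True (p (x k)) (p (x (Suc k))) \<noteq> 0" using own_dist_zero[OF xl xl] neq by metis
    then have "p (x (Suc k)) - p (x k) \<notin> \<int>" by (simp add: own_dist_def frac_eq_0_iff)
    then show ?thesis by (simp add: own_dist_def frac_neg[of "p (x (Suc k)) - p (x k)", simplified])
  qed
  define W where "W = real (\<Sum>k<mm. wr k)"
  have x0: "x mm = x 0"
  proof -
    have "(i + mm * r0) mod n = i mod n" using mm_dvd by (auto elim!: dvdE)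
    then show ?thesis by (simp add: x_def)
  qed
  have "(\<Sum>k<mm. int (x (Suc k)) - int (x k)) = int (x mm) - int (x 0)" by (rule sum_lessThan_telescope)
  then have "(\<Sum>k<mm. int r0 - int n * int (wr k)) = 0" using x0 hx by simp
  then have "int mm * int r0 - int n * (\<Sum>k<mm. int (wr k)) = 0" by (simp add: sum_subtractf sum_distrib_left)
  then have "int n * int (\<Sum>k<mm. wr k) = int mm * int r0" by simp
  then have Wn: "real n * W = real mm * real r0" unfolding W_def by (metis of_int_of_nat_eq of_nat_mult)
  have sT: "(\<Sum>k<mm. own_dist True (p (x k)) (p (x (Suc k)))) = W"
  proof -
    have "(\<Sum>k<mm. own_dist True (p (x k)) (p (x (Suc k)))) = (\<Sum>k<mm. p (x (Suc k)) - p (x k)) + (\<Sum>k<mm. real (wr k))"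
      by (simp add: stepT sum.distrib)
    also have "(\<Sum>k<mm. p (x (Suc k)) - p (x k)) = p (x mm) - p (x 0)" by (rule sum_lessThan_telescope)
    finally show ?thesis using x0 by (simp add: W_def)
  qed
  have sH: "sum_list (H mm i) = (\<Sum>k<mm. own_dist (ori i) (p (x k)) (p (x (Suc k))))"
    unfolding sum_H x_def by (rule sum.cong) (simp_all add: obs_ph1)
  show ?thesis
  proof (intro exI conjI)
    show "real n * W = real mm * real r0" by (rule Wn)
    show "sum_list (H mm i) = (if ori i then W else real mm - W)"
    proof (cases "ori i")
      case True then show ?thesis using sH sT by simp
    next
      case False
      have "sum_list (H mm i) = (\<Sum>k<mm. 1 - own_dist True (p (x k)) (p (x (Suc k))))"
        using sH False by (simp add: stepF)
      also have "\<dots> = real mm - W" using sT by (simp add: sum_subtractf)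
      finally show ?thesis using False by simp
    qed
  qed
qed

lemma wind_DA:
  assumes kfw: "kf = windk" and r0nz: "r0 \<noteq> 0" and r2: "2 * r0 \<noteq> n"
  shows "\<forall>i<n. (ori i = keepg i) = (2 * r0 < n)"
proof (intro allI impI)
  fix i assume i: "i < n"
  obtain W where W: "real n * W = real mm * real r0" "sum_list (H mm i) = (if ori i then W else real mm - W)"
    using wind_sum[OF r0nz i] by blast
  have kp: "keepg i = (2 * sum_list (H mm i) < real mm)" unfolding keepg_def by (simp add: kfw windk_def)
  have np: "0 < real n" using n_pos by simp
  have mp: "0 < real mm" using mm_pos by simp
  have nW: "real n * (2 * W) = real mm * (2 * real r0)"
  proof -
    have "real n * (2 * W) = 2 * (real n * W)" by simp
    also have "\<dots> = 2 * (real mm * real r0)" by (simp only: W(1))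
    finally show ?thesis by simp
  qed
  have a: "2 * W < real mm \<longleftrightarrow> 2 * r0 < n"
  proof -
    have "2 * W < real mm \<longleftrightarrow> real n * (2 * W) < real n * real mm" using np by simp
    also have "\<dots> \<longleftrightarrow> real mm * (2 * real r0) < real mm * real n" unfolding nW by (simp add: mult.commute)
    also have "\<dots> \<longleftrightarrow> 2 * real r0 < real n" using mp by simp
    finally show ?thesis by linarith
  qed
  have b: "2 * (real mm - W) < real mm \<longleftrightarrow> n < 2 * r0"
  proof -
    have "2 * (real mm - W) < real mm \<longleftrightarrow> real mm < 2 * W" by simp
    also have "\<dots> \<longleftrightarrow> real n * real mm < real n * (2 * W)" using np by simp
    also have "\<dots> \<longleftrightarrow> real mm * real n < real mm * (2 * real r0)" unfolding nW by (simp add: mult.commute)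
    also have "\<dots> \<longleftrightarrow> real n < 2 * real r0" using mp by simp
    finally show ?thesis by linarith
  qed
  show "(ori i = keepg i) = (2 * r0 < n)"
    using kp W(2) a b r2 by (cases "ori i") auto
qed

lemma wind_zero:
  assumes kfw: "kf = windk" and r0z: "r0 = 0"
  shows "\<forall>i<n. keepg i"
proof (intro allI impI)
  fix i assume i: "i < n"
  have m1: "mm = 1" using r0z n_pos by (simp add: mm_def)
  have "sum_list (H mm i) = obs 0 i" using m1 by (simp add: sum_H)
  also have "obs 0 i = 0" using obs_zero[OF i] rr_ph1[of 0] m1 r0z by simp
  finally have "sum_list (H mm i) = 0" .
  then show "keepg i" unfolding keepg_def using m1 by (simp add: kfw windk_def)
qed

lemma cover:
  assumes cop: "coprime sv n" and j: "j < n"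
  shows "\<exists>t \<le> n + 2 * B N. sh t = j"
proof -
  have "(\<exists>k<mm. (k * r0) mod n = j) \<or> (\<exists>q \<le> n - mm. PP q = j)"
    by (rule coverage[OF n_pos cop mm_def PP.simps(1) PP.simps(2) j])
  then show ?thesis
  proof
    assume "\<exists>k<mm. (k * r0) mod n = j"
    then obtain k where k: "k < mm" "(k * r0) mod n = j" by blast
    then have "sh k = j" using sh_ph1[of k] by simp
    moreover have "k \<le> n + 2 * B N" using k mm_le by simp
    ultimately show ?thesis by blast
  next
    assume "\<exists>q \<le> n - mm. PP q = j"
    then obtain q where q: "q \<le> n - mm" "PP q = j" by blast
    then have "sh (mm + 2 * B N + q) = j" using sh_ph3 by simp
    moreover have "mm + 2 * B N + q \<le> n + 2 * B N" using q mm_le by simp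
    ultimately show ?thesis by blast
  qed
qed

lemma LD_correct:
  assumes cop: "coprime sv n" and i: "i < n"
  shows "outf (H (n + 2 * B N) i) = {own_dist (ori i) (p i) (p j) | j. j < n \<and> j \<noteq> i}"
proof -
  define T where "T = n + 2 * B N"
  have fr: "k \<le> T \<Longrightarrow> frac (sum_list (take k (H T i))) = own_dist (ori i) (p i) (p ((i + sh k) mod n))" for k
    using take_H pos_H[OF i] by simp
  have "outf (H T i) = {own_dist (ori i) (p i) (p ((i + sh k) mod n)) | k. k \<le> T} - {0}"
    unfolding outf_def len_H using fr by (auto; metis)
  also have "\<dots> = {own_dist (ori i) (p i) (p j) | j. j < n \<and> j \<noteq> i}"
  proof
    show "{own_dist (ori i) (p i) (p ((i + sh k) mod n)) | k. k \<le> T} - {0} \<subseteq> {own_dist (ori i) (p i) (p j) | j. j < n \<and> j \<noteq> i}"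
    proof
      fix v assume "v \<in> {own_dist (ori i) (p i) (p ((i + sh k) mod n)) | k. k \<le> T} - {0}"
      then obtain k where k: "v = own_dist (ori i) (p i) (p ((i + sh k) mod n))" "v \<noteq> 0" by blast
      have jl: "(i + sh k) mod n < n" using n_pos by simp
      have "(i + sh k) mod n \<noteq> i" using k own_dist_zero[OF i jl] by auto
      then show "v \<in> {own_dist (ori i) (p i) (p j) | j. j < n \<and> j \<noteq> i}" using k jl by blast
    qed
  next
    show "{own_dist (ori i) (p i) (p j) | j. j < n \<and> j \<noteq> i} \<subseteq> {own_dist (ori i) (p i) (p ((i + sh k) mod n)) | k. k \<le> T} - {0}"
    proof
      fix v assume "v \<in> {own_dist (ori i) (p i) (p j) | j. j < n \<and> j \<noteq> i}"
      then obtain j where j: "v = own_dist (ori i) (p i) (p j)" "j < n" "j \<noteq> i" by blast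
      obtain t where t: "t \<le> T" "sh t = (j + n - i) mod n"
        using cover[OF cop, of "(j + n - i) mod n"] n_pos by (auto simp: T_def)
      have "(i + sh t) mod n = (i + (j + n - i)) mod n" unfolding t(2) by (simp add: mod_add_right_eq)
      also have "i + (j + n - i) = j + n" using i by simp
      also have "(j + n) mod n = j" using j by simp
      finally have e: "(i + sh t) mod n = j" .
      have "v \<noteq> 0" using j own_dist_zero[OF i j(2)] by auto
      moreover have "v = own_dist (ori i) (p i) (p ((i + sh t) mod n))" using j e by simp
      ultimately show "v \<in> {own_dist (ori i) (p i) (p ((i + sh k) mod n)) | k. k \<le> T} - {0}"
        using t(1) by blast
    qed
  qed
  finally show ?thesis by (simp add: T_def)
qed

end

lemma nbits_gt: "N < 2 ^ nbits N"
proof (induction N rule: nbits.induct)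
  case 1 then show ?case by simp
next
  case (2 k)
  have "Suc k = 2 * (Suc k div 2) + Suc k mod 2" by simp
  moreover have "Suc k mod 2 < 2" by simp
  ultimately show ?case using 2 by simp
qed

lemma nbits_pos: "0 < N \<Longrightarrow> 0 < nbits N"
  by (cases N) auto

lemma nbits_le: "0 < N \<Longrightarrow> 2 ^ (nbits N - 1) \<le> N"
proof (induction N rule: nbits.induct)
  case 1 then show ?case by simp
next
  case (2 k)
  show ?case
  proof (cases "Suc k div 2 = 0")
    case True
    then show ?thesis by simp
  next
    case False
    then have IH: "2 ^ (nbits (Suc k div 2) - 1) \<le> Suc k div 2" using 2 by simp
    have p: "0 < nbits (Suc k div 2)" using False nbits_pos by simp
    have "2 ^ (nbits (Suc k) - 1) = 2 * 2 ^ (nbits (Suc k div 2) - 1)"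
      using p by (simp add: power_Suc[symmetric])
    also have "\<dots> \<le> 2 * (Suc k div 2)" using IH by simp
    also have "\<dots> \<le> Suc k" by simp
    finally show ?thesis .
  qed
qed

lemma nbits_bound: "4 < n \<Longrightarrow> n \<le> N \<Longrightarrow> real (n + 2 * nbits N) \<le> real n + 4 * log 2 (real N)"
proof -
  assume a: "4 < n" "n \<le> N"
  then have N: "0 < N" "2 \<le> N" by auto
  have "real (2 ^ (nbits N - 1)) \<le> real N" using nbits_le[OF N(1)] by linarith
  then have h: "(2::real) ^ (nbits N - 1) \<le> real N" by simp
  have iff: "log 2 ((2::real) ^ (nbits N - 1)) \<le> log 2 (real N) \<longleftrightarrow> (2::real) ^ (nbits N - 1) \<le> real N"
    by (rule log_le_cancel_iff) (use N in auto)
  have "log 2 ((2::real) ^ (nbits N - 1)) \<le> log 2 (real N)" using iff h by blast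
  then have "real (nbits N - 1) \<le> log 2 (real N)" by simp
  then have b: "real (nbits N) \<le> log 2 (real N) + 1" by linarith
  have "log 2 2 \<le> log 2 (real N)" using N by simp
  then have c: "1 \<le> log 2 (real N)" by simp
  show ?thesis using b c by simp
qed

lemma LD_gen:
  fixes spec :: "model \<Rightarrow> nat \<Rightarrow> (nat \<Rightarrow> bool) \<Rightarrow> (nat \<Rightarrow> 'a) \<Rightarrow> bool"
  assumes Bb: "\<And>N n. 4 < n \<Longrightarrow> n \<le> N \<Longrightarrow> real (n + 2 * B N) \<le> real n + C * log 2 (real N)"
   and Hc: "\<And>N n p ori ident inp i. valid_config N n p ident \<Longrightarrow> m = Lazy \<or> odd n \<Longrightarrow> spec m n ori inp \<Longrightarrow> i < n \<Longrightarrow>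
      outf (snd (run (galg m B dz kf lf) N n p ori ident inp (n + 2 * B N)) i) = {own_dist (ori i) (p i) (p j) | j. j < n \<and> j \<noteq> i}"
  shows "LD_solvable m spec"
  unfolding LD_solvable_def
proof (intro exI conjI allI impI)
  show "allowed m (galg m B dz kf lf N n x y z)" for N n x y z by (rule galg_allowed)
  show "real (n + 2 * B N) \<le> real n + C * log 2 (real N)" if "4 < n \<and> n \<le> N" for N n
    using Bb that by blast
  show "outf (snd (run (galg m B dz kf lf) N n p ori ident inp (n + 2 * B N)) i) = {own_dist (ori i) (p i) (p j) | j. j < n \<and> j \<noteq> i}"
    if "valid_config N n p ident \<and> (m = Lazy \<or> odd n) \<and> spec m n ori inp" "i < n" for N n p ori ident inp i
    using Hc that by blast
qed

lemma log_nonneg_N: "4 < n \<Longrightarrow> n \<le> N \<Longrightarrow> 0 \<le> log 2 (real N)"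
  by simp

lemma small_ident: "valid_config N n p ident \<Longrightarrow> i < n \<Longrightarrow> ident i < 2 ^ nbits N"
  using nbits_gt[of N] by (auto simp: valid_config_def)

lemma case_LN: "LD_solvable Lazy ntm_spec"
proof (rule LD_gen[where B = nbits and dz = "\<lambda>x. x" and kf = windk and lf = "\<lambda>_. True" and C = 4])
  show "real (n + 2 * nbits N) \<le> real n + 4 * log 2 (real N)" if "4 < n" "n \<le> N" for N n
    using nbits_bound that by blast
next
  fix N n p ori ident and inp :: "nat \<Rightarrow> dir" and i
  assume vc: "valid_config N n p ident" and mc: "Lazy = Lazy \<or> odd n" and sp: "ntm_spec Lazy n ori inp" and i: "i < n"
  interpret L: LDset N n p ori ident inp Lazy nbits "\<lambda>x. x" windk "\<lambda>_. True" by unfold_locales (rule vc)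
  have "L.r0 = rot_index n ori inp" unfolding L.r0_def
    by (rule rot_cong) (simp add: L.dd_def allowed_def)
  then have r0: "L.r0 \<noteq> 0" "2 * L.r0 \<noteq> n" using sp by (simp_all add: ntm_spec_def)
  have DA: "\<forall>i<n. (ori i = L.keepg i) = (2 * L.r0 < n)" by (rule L.wind_DA[OF refl r0])
  have LE: "card (L.CC (nbits N)) = 1"
    by (rule L.LE_tests[OF DA]) (auto simp: small_ident[OF vc])
  have DAb: "Lazy = Basic \<Longrightarrow> \<forall>i<n. (ori i = L.keepg i) = True" by simp
  have cop: "coprime L.sv n" by (rule L.sv_coprime[OF DAb mc LE])
  show "outf (snd (run (galg Lazy nbits (\<lambda>x. x) windk (\<lambda>_. True)) N n p ori ident inp (n + 2 * nbits N)) i) =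
      {own_dist (ori i) (p i) (p j) | j. j < n \<and> j \<noteq> i}"
    using L.LD_correct[OF cop i] by (simp add: L.H_def)
qed

lemma case_BN: "LD_solvable Basic ntm_spec"
proof (rule LD_gen[where B = nbits and dz = "\<lambda>x. x" and kf = windk and lf = "\<lambda>_. True" and C = 4])
  show "real (n + 2 * nbits N) \<le> real n + 4 * log 2 (real N)" if "4 < n" "n \<le> N" for N n
    using nbits_bound that by blast
next
  fix N n p ori ident and inp :: "nat \<Rightarrow> dir" and i
  assume vc: "valid_config N n p ident" and mc: "Basic = Lazy \<or> odd n" and sp: "ntm_spec Basic n ori inp" and i: "i < n"
  interpret L: LDset N n p ori ident inp Basic nbits "\<lambda>x. x" windk "\<lambda>_. True" by unfold_locales (rule vc)
  have "L.r0 = rot_index n ori inp" unfolding L.r0_def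
    by (rule rot_cong) (use sp in \<open>simp add: L.dd_def ntm_spec_def\<close>)
  then have r0: "L.r0 \<noteq> 0" "2 * L.r0 \<noteq> n" using sp by (simp_all add: ntm_spec_def)
  have DA: "\<forall>i<n. (ori i = L.keepg i) = (2 * L.r0 < n)" by (rule L.wind_DA[OF refl r0])
  have LE: "card (L.CC (nbits N)) = 1"
    by (rule L.LE_tests[OF DA]) (use mc in \<open>auto simp: small_ident[OF vc]\<close>)
  have DAb: "Basic = Basic \<Longrightarrow> \<forall>i<n. (ori i = L.keepg i) = (2 * L.r0 < n)" using DA by blast
  have cop: "coprime L.sv n" by (rule L.sv_coprime[OF DAb mc LE])
  show "outf (snd (run (galg Basic nbits (\<lambda>x. x) windk (\<lambda>_. True)) N n p ori ident inp (n + 2 * nbits N)) i) =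
      {own_dist (ori i) (p i) (p j) | j. j < n \<and> j \<noteq> i}"
    using L.LD_correct[OF cop i] by (simp add: L.H_def)
qed

lemma case_LL: "LD_solvable Lazy le_spec"
proof (rule LD_gen[where B = "\<lambda>_. 0" and dz = "\<lambda>_. Idle" and kf = "\<lambda>_ _ _. True" and lf = "\<lambda>x. x" and C = 4])
  show "real (n + 2 * 0) \<le> real n + 4 * log 2 (real N)" if "4 < n" "n \<le> N" for N n
    using that by simp
next
  fix N n p ori ident and inp :: "nat \<Rightarrow> bool" and i
  assume vc: "valid_config N n p ident" and mc: "Lazy = Lazy \<or> odd n" and sp: "le_spec Lazy n ori inp" and i: "i < n"
  interpret L: LDset N n p ori ident inp Lazy "\<lambda>_. 0" "\<lambda>_. Idle" "\<lambda>_ _ _. True" "\<lambda>x. x" by unfold_locales (rule vc)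
  have LE: "card (L.CC 0) = 1" using sp by (simp add: le_spec_def)
  have DAb: "Lazy = Basic \<Longrightarrow> \<forall>i<n. (ori i = L.keepg i) = True" by simp
  have cop: "coprime L.sv n" by (rule L.sv_coprime[OF DAb mc LE])
  show "outf (snd (run (galg Lazy (\<lambda>_. 0) (\<lambda>_. Idle) (\<lambda>_ _ _. True) (\<lambda>x. x)) N n p ori ident inp (n + 2 * 0)) i) =
      {own_dist (ori i) (p i) (p j) | j. j < n \<and> j \<noteq> i}"
    using L.LD_correct[OF cop i] by (simp add: L.H_def)
qed

lemma all_right_zero:
  assumes n: "0 < n" and on: "odd n" and z: "rot_index n ori (\<lambda>_. Right) = 0"
  shows "(\<forall>i<n. ori i) \<or> (\<forall>i<n. \<not> ori i)"
proof -
  define A where "A = {i. i < n \<and> ori i}"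
  have As: "A \<subseteq> {..<n}" by (auto simp: A_def)
  have cA: "card A \<le> n" using card_mono[OF finite_lessThan As] by simp
  have "(\<Sum>i<n. ctr (ori i) Right) = (\<Sum>i<n. if i \<in> A then 1 else -1)"
    by (rule sum.cong) (auto simp: A_def ctr_def obj_cw_def obj_acw_def)
  also have "\<dots> = int (card A) * 1 + int (n - card A) * (-1)" by (rule sum_if_set[OF As])
  finally have s: "(\<Sum>i<n. ctr (ori i) Right) = 2 * int (card A) - int n" using cA by (simp add: of_nat_diff)
  have "int n dvd 2 * int (card A) - int n" using z rot_zero_iff[OF n] s by simp
  then have "int n dvd 2 * int (card A)"
    using dvd_add_right_iff[of "int n" "int n" "2 * int (card A) - int n"] by simp
  moreover have "coprime (int n) 2" using on by simp
  ultimately have "int n dvd int (card A)" by (simp add: coprime_dvd_mult_right_iff)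
  then have "card A = 0 \<or> card A = n" using dvd_range_int[of "int (card A)" n] cA n by simp
  then show ?thesis
  proof
    assume "card A = 0"
    then have "A = {}" using finite_subset[OF As] by simp
    then show ?thesis by (auto simp: A_def)
  next
    assume "card A = n"
    then have "A = {..<n}" using card_subset_eq[OF finite_lessThan As] by simp
    then show ?thesis by (auto simp: A_def)
  qed
qed

lemma case_BL: "LD_solvable Basic le_spec"
proof (rule LD_gen[where B = "\<lambda>_. 0" and dz = "\<lambda>_. Right" and kf = windk and lf = "\<lambda>x. x" and C = 4])
  show "real (n + 2 * 0) \<le> real n + 4 * log 2 (real N)" if "4 < n" "n \<le> N" for N n
    using that by simp
next
  fix N n p ori ident and inp :: "nat \<Rightarrow> bool" and i
  assume vc: "valid_config N n p ident" and mc: "Basic = Lazy \<or> odd n" and sp: "le_spec Basic n ori inp" and i: "i < n"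
  interpret L: LDset N n p ori ident inp Basic "\<lambda>_. 0" "\<lambda>_. Right" windk "\<lambda>x. x" by unfold_locales (rule vc)
  have on: "odd n" using mc by simp
  have LE: "card (L.CC 0) = 1" using sp by (simp add: le_spec_def)
  have r0e: "L.r0 = rot_index n ori (\<lambda>_. Right)" unfolding L.r0_def
    by (rule rot_cong) (simp add: L.dd_def allowed_def)
  have DA: "\<exists>\<kappa>. \<forall>i<n. (ori i = L.keepg i) = \<kappa>"
  proof (cases "L.r0 = 0")
    case True
    have k: "\<forall>i<n. L.keepg i" by (rule L.wind_zero[OF refl True])
    have "(\<forall>i<n. ori i) \<or> (\<forall>i<n. \<not> ori i)" using all_right_zero[OF L.n_pos on] True r0e by simp
    then show ?thesis using k by (metis (full_types))
  next
    case False
    have "2 * L.r0 \<noteq> n"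
    proof
      assume "2 * L.r0 = n"
      then have "even n" by (metis dvd_triv_left)
      then show False using on by simp
    qed
    then show ?thesis using L.wind_DA[OF refl False] by blast
  qed
  then obtain \<kappa> where DA': "\<forall>i<n. (ori i = L.keepg i) = \<kappa>" by blast
  have DAb: "Basic = Basic \<Longrightarrow> \<forall>i<n. (ori i = L.keepg i) = \<kappa>" using DA' by blast
  have cop: "coprime L.sv n" by (rule L.sv_coprime[OF DAb mc LE])
  show "outf (snd (run (galg Basic (\<lambda>_. 0) (\<lambda>_. Right) windk (\<lambda>x. x)) N n p ori ident inp (n + 2 * 0)) i) =
      {own_dist (ori i) (p i) (p j) | j. j < n \<and> j \<noteq> i}"
    using L.LD_correct[OF cop i] by (simp add: L.H_def)
qed

lemma case_LD: "LD_solvable Lazy da_spec"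
proof (rule LD_gen[where B = nbits and dz = "\<lambda>_. Idle" and kf = "\<lambda>a _ _. a" and lf = "\<lambda>_. True" and C = 4])
  show "real (n + 2 * nbits N) \<le> real n + 4 * log 2 (real N)" if "4 < n" "n \<le> N" for N n
    using nbits_bound that by blast
next
  fix N n p ori ident and inp :: "nat \<Rightarrow> bool" and i
  assume vc: "valid_config N n p ident" and mc: "Lazy = Lazy \<or> odd n" and sp: "da_spec Lazy n ori inp" and i: "i < n"
  interpret L: LDset N n p ori ident inp Lazy nbits "\<lambda>_. Idle" "\<lambda>a _ _. a" "\<lambda>_. True" by unfold_locales (rule vc)
  obtain c where c: "\<forall>i<n. (ori i = inp i) = c" using sp by (auto simp: da_spec_def)
  have DA: "\<forall>i<n. (ori i = L.keepg i) = c" using c by (simp add: L.keepg_def)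
  have LE: "card (L.CC (nbits N)) = 1"
    by (rule L.LE_tests[OF DA]) (auto simp: small_ident[OF vc])
  have DAb: "Lazy = Basic \<Longrightarrow> \<forall>i<n. (ori i = L.keepg i) = True" by simp
  have cop: "coprime L.sv n" by (rule L.sv_coprime[OF DAb mc LE])
  show "outf (snd (run (galg Lazy nbits (\<lambda>_. Idle) (\<lambda>a _ _. a) (\<lambda>_. True)) N n p ori ident inp (n + 2 * nbits N)) i) =
      {own_dist (ori i) (p i) (p j) | j. j < n \<and> j \<noteq> i}"
    using L.LD_correct[OF cop i] by (simp add: L.H_def)
qed

lemma case_BD: "LD_solvable Basic da_spec"
proof (rule LD_gen[where B = nbits and dz = "\<lambda>_. Right" and kf = "\<lambda>a _ _. a" and lf = "\<lambda>_. True" and C = 4])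
  show "real (n + 2 * nbits N) \<le> real n + 4 * log 2 (real N)" if "4 < n" "n \<le> N" for N n
    using nbits_bound that by blast
next
  fix N n p ori ident and inp :: "nat \<Rightarrow> bool" and i
  assume vc: "valid_config N n p ident" and mc: "Basic = Lazy \<or> odd n" and sp: "da_spec Basic n ori inp" and i: "i < n"
  interpret L: LDset N n p ori ident inp Basic nbits "\<lambda>_. Right" "\<lambda>a _ _. a" "\<lambda>_. True" by unfold_locales (rule vc)
  obtain c where c: "\<forall>i<n. (ori i = inp i) = c" using sp by (auto simp: da_spec_def)
  have DA: "\<forall>i<n. (ori i = L.keepg i) = c" using c by (simp add: L.keepg_def)
  have LE: "card (L.CC (nbits N)) = 1"
    by (rule L.LE_tests[OF DA]) (use mc in \<open>auto simp: small_ident[OF vc]\<close>)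
  have DAb: "Basic = Basic \<Longrightarrow> \<forall>i<n. (ori i = L.keepg i) = c" using DA by blast
  have cop: "coprime L.sv n" by (rule L.sv_coprime[OF DAb mc LE])
  show "outf (snd (run (galg Basic nbits (\<lambda>_. Right) (\<lambda>a _ _. a) (\<lambda>_. True)) N n p ori ident inp (n + 2 * nbits N)) i) =
      {own_dist (ori i) (p i) (p j) | j. j < n \<and> j \<noteq> i}"
    using L.LD_correct[OF cop i] by (simp add: L.H_def)
qed

theorem lemma12:
  shows "LD_solvable Lazy ntm_spec \<and> LD_solvable Lazy le_spec \<and> LD_solvable Lazy da_spec
       \<and> LD_solvable Basic ntm_spec \<and> LD_solvable Basic le_spec \<and> LD_solvable Basic da_spec"
  using case_LN case_LL case_LD case_BN case_BL case_BD by blast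


end
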